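(* Let $G$ be a Hausdorff compact topological monoid with neutral element $e$, and let $f:G\to G$ be a continuous mapping such that for each $x,y\in G$ and each neighbourhood $V$ of $e$ there exist $z\in G$ and $n\in\mathbb{N}$ with $f^n(x),f^n(y)\in zV$. Then $f$ has a unique fixed point.
   Context: A topological monoid is a semigroup with neutral element, equipped with a topology making multiplication jointly continuous. $zV=\{zv:v\in V\}$; $f^n$ is the $n$-fold iterate of $f$. *)

theory Defs
  imports "HOL-Analysis.Analysis"
begin

end

theory Submission
  imports Defs
begin

lemma mult_nbhd:
  fixes p :: "'a :: topological_monoid_mult"
  assumes "open A" "p \<in> A"
  shows "\<exists>P Q. open P \<and> p \<in> P \<and> open Q \<and> (1::'a) \<in> Q \<and> (\<forall>w\<in>P. \<forall>v\<in>Q. w * v \<in> A)"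
proof -
  have "LIM x (nhds p \<times>\<^sub>F nhds 1). fst x * snd x :> nhds p"
    using tendsto_mult_Pair[of p 1] by simp
  from topological_tendstoD[OF this assms]
  have "\<forall>\<^sub>F x in nhds p \<times>\<^sub>F nhds 1. fst x * snd x \<in> A" .
  hence "\<exists>Pf Pg. eventually Pf (nhds p) \<and> eventually Pg (nhds (1::'a)) \<and> (\<forall>x y. Pf x \<longrightarrow> Pg y \<longrightarrow> fst (x, y) * snd (x, y) \<in> A)"
    by (simp only: eventually_prod_filter)
  then obtain Pf Pg where h: "eventually Pf (nhds p)" "eventually Pg (nhds (1::'a))"
    "\<forall>x y. Pf x \<longrightarrow> Pg y \<longrightarrow> fst (x, y) * snd (x, y) \<in> A"
    by (elim exE conjE)
  from h(1) obtain P where P: "open P" "p \<in> P" "\<forall>x\<in>P. Pf x" unfolding eventually_nhds by (elim exE conjE)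
  from h(2) obtain Q where Q: "open Q" "1 \<in> Q" "\<forall>x\<in>Q. Pg x" unfolding eventually_nhds by (elim exE conjE)
  have "\<forall>w\<in>P. \<forall>v\<in>Q. w * v \<in> A" using P(3) Q(3) h(3) by simp
  thus ?thesis using P Q by blast
qed

lemma uniform_nbhd:
  fixes S :: "'a :: topological_monoid_mult \<Rightarrow> 'a \<Rightarrow> bool"
  assumes cpt: "compact (UNIV :: 'a set)"
    and loc: "\<And>p. \<exists>A. open A \<and> p \<in> A \<and> (\<forall>a\<in>A. \<forall>b\<in>A. \<not> S a b)"
  shows "\<exists>V. open V \<and> (1::'a) \<in> V \<and> (\<forall>z a b. a \<in> (\<lambda>v. z * v) ` V \<longrightarrow> b \<in> (\<lambda>v. z * v) ` V \<longrightarrow> \<not> S a b)"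
proof -
  have "\<forall>p. \<exists>PQ. open (fst PQ) \<and> p \<in> fst PQ \<and> open (snd PQ) \<and> (1::'a) \<in> snd PQ \<and>
      (\<forall>w\<in>fst PQ. \<forall>v\<in>snd PQ. \<forall>v'\<in>snd PQ. \<not> S (w * v) (w * v'))"
  proof
    fix p
    obtain A where A: "open A" "p \<in> A" "\<forall>a\<in>A. \<forall>b\<in>A. \<not> S a b" using loc[of p] by (elim exE conjE)
    obtain P Q where PQ: "open P" "p \<in> P" "open Q" "(1::'a) \<in> Q" "\<forall>w\<in>P. \<forall>v\<in>Q. w * v \<in> A"
      using mult_nbhd[OF A(1,2)] by (elim exE conjE)
    have "\<forall>w\<in>P. \<forall>v\<in>Q. \<forall>v'\<in>Q. \<not> S (w * v) (w * v')"
      using PQ(5) A(3) by simp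
    thus "\<exists>PQ. open (fst PQ) \<and> p \<in> fst PQ \<and> open (snd PQ) \<and> (1::'a) \<in> snd PQ \<and>
      (\<forall>w\<in>fst PQ. \<forall>v\<in>snd PQ. \<forall>v'\<in>snd PQ. \<not> S (w * v) (w * v'))"
      using PQ by (intro exI[of _ "(P, Q)"]) simp
  qed
  then obtain F where F: "\<forall>p. open (fst (F p)) \<and> p \<in> fst (F p) \<and> open (snd (F p)) \<and> (1::'a) \<in> snd (F p) \<and>
      (\<forall>w\<in>fst (F p). \<forall>v\<in>snd (F p). \<forall>v'\<in>snd (F p). \<not> S (w * v) (w * v'))"
    by (subst (asm) choice_iff) (elim exE)
  define P where "P p = fst (F p)" for p
  define Q where "Q p = snd (F p)" for p
  have PQ: "open (P p)" "p \<in> P p" "open (Q p)" "(1::'a) \<in> Q p"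
      "\<forall>w\<in>P p. \<forall>v\<in>Q p. \<forall>v'\<in>Q p. \<not> S (w * v) (w * v')" for p
    using F unfolding P_def Q_def by simp_all
  have cov: "UNIV \<subseteq> (\<Union>c\<in>UNIV. P c)" using PQ(2) by auto
  obtain T where T: "finite T" "UNIV \<subseteq> (\<Union>c\<in>T. P c)"
    using compactE_image[OF cpt _ cov] PQ(1) by metis
  define V where "V = (\<Inter>c\<in>T. Q c)"
  have "open V" unfolding V_def using T(1) PQ(3) by (intro open_INT) auto
  moreover have "1 \<in> V" unfolding V_def using PQ(4) by auto
  moreover have "\<forall>z a b. a \<in> (\<lambda>v. z * v) ` V \<longrightarrow> b \<in> (\<lambda>v. z * v) ` V \<longrightarrow> \<not> S a b"
  proof (intro allI impI)
    fix z a b assume a: "a \<in> (\<lambda>v. z * v) ` V" and b: "b \<in> (\<lambda>v. z * v) ` V"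
    obtain c where c: "c \<in> T" "z \<in> P c" using T(2) by blast
    obtain v where v: "v \<in> V" "a = z * v" using a by (elim imageE) simp
    obtain v' where v': "v' \<in> V" "b = z * v'" using b by (elim imageE) simp
    have "V \<subseteq> Q c" unfolding V_def using c(1) by (rule INT_lower)
    hence "v \<in> Q c" "v' \<in> Q c" using v v' by auto
    thus "\<not> S a b" using PQ(5)[of c] c(2) v(2) v'(2) by simp
  qed
  ultimately show ?thesis by blast
qed

lemma funpow_fix: "f x = x \<Longrightarrow> (f ^^ n) x = x"
  by (induction n) auto

theorem theorem14:
  fixes f :: "'a :: {topological_monoid_mult, t2_space} \<Rightarrow> 'a"
  assumes "compact (UNIV :: 'a set)"
    and "continuous_on UNIV f"
    and "\<And>x y V. open V \<Longrightarrow> (1::'a) \<in> V \<Longrightarrow>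
           \<exists>z n. (f ^^ n) x \<in> (\<lambda>v. z * v) ` V \<and> (f ^^ n) y \<in> (\<lambda>v. z * v) ` V"
  shows "\<exists>!x. f x = x"
proof -
  have ex: "\<exists>x. f x = x"
  proof (rule ccontr)
    assume nf: "\<not> (\<exists>x. f x = x)"
    have "\<exists>V. open V \<and> (1::'a) \<in> V \<and> (\<forall>z a b. a \<in> (\<lambda>v. z * v) ` V \<longrightarrow> b \<in> (\<lambda>v. z * v) ` V \<longrightarrow> \<not> b = f a)"
    proof (rule uniform_nbhd[OF assms(1)])
      fix p
      have ne: "p \<noteq> f p" using nf by (metis)
      obtain A B where AB: "open A" "open B" "p \<in> A" "f p \<in> B" "A \<inter> B = {}"
        using hausdorff[OF ne] by (elim exE conjE)
      have "open (f -` B)" using assms(2) AB(2) by (simp add: continuous_on_open_vimage)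
      moreover have "\<forall>a\<in>A \<inter> f -` B. \<forall>b\<in>A \<inter> f -` B. \<not> b = f a"
        using AB(5) by auto
      ultimately show "\<exists>A. open A \<and> p \<in> A \<and> (\<forall>a\<in>A. \<forall>b\<in>A. \<not> b = f a)"
        using AB(1,3,4) by (intro exI[of _ "A \<inter> f -` B"]) auto
    qed
    then obtain V where V: "open V" "1 \<in> V" "\<forall>z a b. a \<in> (\<lambda>v. z * v) ` V \<longrightarrow> b \<in> (\<lambda>v. z * v) ` V \<longrightarrow> \<not> b = f a"
      by (elim exE conjE)
    fix x :: 'a
    obtain z n where zn: "(f ^^ n) x \<in> (\<lambda>v. z * v) ` V" "(f ^^ n) (f x) \<in> (\<lambda>v. z * v) ` V"
      using assms(3)[OF V(1,2), of x "f x"] by (elim exE conjE)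
    have "(f ^^ n) (f x) = f ((f ^^ n) x)" by (simp add: funpow_swap1)
    thus False using V(3) zn by simp
  qed
  have un: "x = y" if "f x = x" "f y = y" for x y
  proof (rule ccontr)
    assume ne: "x \<noteq> y"
    have "\<exists>V. open V \<and> (1::'a) \<in> V \<and> (\<forall>z a b. a \<in> (\<lambda>v. z * v) ` V \<longrightarrow> b \<in> (\<lambda>v. z * v) ` V \<longrightarrow> \<not> (a = x \<and> b = y))"
    proof (rule uniform_nbhd[OF assms(1)])
      fix p
      show "\<exists>A. open A \<and> p \<in> A \<and> (\<forall>a\<in>A. \<forall>b\<in>A. \<not> (a = x \<and> b = y))"
      proof (cases "p = x")
        case True
        obtain A B where AB: "open A" "open B" "x \<in> A" "y \<in> B" "A \<inter> B = {}"
          using hausdorff[OF ne] by (elim exE conjE)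
        have "y \<notin> A" using AB(4,5) by auto
        thus ?thesis using AB(1,3) True by (intro exI[of _ A]) auto
      next
        case False
        obtain A B where AB: "open A" "open B" "p \<in> A" "x \<in> B" "A \<inter> B = {}"
          using hausdorff[OF False] by (elim exE conjE)
        have "x \<notin> A" using AB(4,5) by auto
        thus ?thesis using AB(1,3) by (intro exI[of _ A]) auto
      qed
    qed
    then obtain V where V: "open V" "1 \<in> V" "\<forall>z a b. a \<in> (\<lambda>v. z * v) ` V \<longrightarrow> b \<in> (\<lambda>v. z * v) ` V \<longrightarrow> \<not> (a = x \<and> b = y)"
      by (elim exE conjE)
    obtain z n where zn: "(f ^^ n) x \<in> (\<lambda>v. z * v) ` V" "(f ^^ n) y \<in> (\<lambda>v. z * v) ` V"
      using assms(3)[OF V(1,2), of x y] by (elim exE conjE)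
    have "(f ^^ n) x = x" "(f ^^ n) y = y" using that by (simp_all add: funpow_fix)
    thus False using V(3)[THEN spec[of _ z], THEN spec[of _ x], THEN spec[of _ y]] zn by simp
  qed
  show ?thesis using ex un by blast
qed

end
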